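(* There is a context-free language $L$ such that ${\rm pssr}(L)$ is not context-free; for instance $L=\{0^m1^m2^n3^n : m,n\ge1\}$.
   Context: For words $x=a_1\cdots a_n$, $y=b_1\cdots b_n$ of the same length, the perfect shuffle is $x\,\text{sh}\,y=a_1b_1a_2b_2\cdots a_nb_n$. $x^R$ denotes the reversal of $x$. For a language $L$, ${\rm pssr}(L)=\{x\,\text{sh}\,x^R : x\in L\}$. *)

theory Defs
  imports Main
begin

datatype ('n, 't) sym = NT 'n | Tm 't

type_synonym ('n, 't) prods = "('n \<times> ('n, 't) sym list) set"

inductive derives1 :: "('n, 't) prods \<Rightarrow> ('n, 't) sym list \<Rightarrow> ('n, 't) sym list \<Rightarrow> bool"
  for P where
  step: "(A, w) \<in> P \<Longrightarrow> derives1 P (l @ [NT A] @ r) (l @ w @ r)"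

definition derives :: "('n, 't) prods \<Rightarrow> ('n, 't) sym list \<Rightarrow> ('n, 't) sym list \<Rightarrow> bool" where
  "derives P = (derives1 P)\<^sup>*\<^sup>*"

definition Lang :: "('n, 't) prods \<Rightarrow> 'n \<Rightarrow> 't list set" where
  "Lang P S = {w. derives P [NT S] (map Tm w)}"

text \<open>A language is context-free if it is generated by a finite grammar
  (nonterminals w.l.o.g. natural numbers).\<close>
definition CFL :: "'t list set \<Rightarrow> bool" where
  "CFL L \<longleftrightarrow> (\<exists>(P :: (nat, 't) prods) S. finite P \<and> L = Lang P S)"

fun perfect_shuffle :: "'a list \<Rightarrow> 'a list \<Rightarrow> 'a list" where
  "perfect_shuffle (a # x) (b # y) = a # b # perfect_shuffle x y"
| "perfect_shuffle _ _ = []"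

definition pssr :: "'a list set \<Rightarrow> 'a list set" where
  "pssr L = {perfect_shuffle x (rev x) | x. x \<in> L}"

definition L7 :: "nat list set" where
  "L7 = {replicate m 0 @ replicate m 1 @ replicate n 2 @ replicate n 3 | m n. m \<ge> 1 \<and> n \<ge> 1}"

end

theory Submission
  imports Defs
begin


inductive dT :: "('n,'t) prods \<Rightarrow> ('n,'t) sym list \<Rightarrow> 't list \<Rightarrow> nat \<Rightarrow> bool" for P where
  nil: "dT P [] [] 0"
| tm: "dT P \<alpha> w s \<Longrightarrow> dT P (Tm a # \<alpha>) (a # w) s"
| nt: "(A,\<gamma>) \<in> P \<Longrightarrow> dT P \<gamma> u s1 \<Longrightarrow> dT P \<alpha> v s2 \<Longrightarrow> dT P (NT A # \<alpha>) (u @ v) (Suc (s1 + s2))"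

lemma dT_Nil[simp]: "dT P [] z s \<longleftrightarrow> z = [] \<and> s = 0"
  by (auto elim: dT.cases intro: dT.intros)

lemma dT_Tm[simp]: "dT P (Tm a # \<alpha>) z s \<longleftrightarrow> (\<exists>w. z = a # w \<and> dT P \<alpha> w s)"
  by (auto elim: dT.cases intro: dT.intros)

lemma dT_NT: "dT P (NT A # \<alpha>) z s \<longleftrightarrow> (\<exists>\<gamma> u v s1 s2. (A,\<gamma>) \<in> P \<and> z = u @ v \<and> s = Suc (s1+s2) \<and> dT P \<gamma> u s1 \<and> dT P \<alpha> v s2)"
  by (rule iffI, erule dT.cases, blast+, auto intro: dT.intros)

lemma dT_single: "dT P [NT A] z s \<longleftrightarrow> (\<exists>\<gamma> s1. (A,\<gamma>) \<in> P \<and> s = Suc s1 \<and> dT P \<gamma> z s1)"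
  by (auto simp: dT_NT)

lemma dT_append: "dT P (\<alpha> @ \<beta>) z s \<longleftrightarrow> (\<exists>z1 z2 s1 s2. z = z1 @ z2 \<and> s = s1 + s2 \<and> dT P \<alpha> z1 s1 \<and> dT P \<beta> z2 s2)"
proof (induction \<alpha> arbitrary: z s)
  case Nil
  then show ?case by auto
next
  case (Cons x \<alpha>)
  show ?case
  proof (cases x)
    case (NT A)
    show ?thesis
    proof
      assume "dT P ((x # \<alpha>) @ \<beta>) z s"
      then obtain \<gamma> u v s1 s2 where "(A,\<gamma>) \<in> P" "z = u @ v" "s = Suc (s1+s2)" "dT P \<gamma> u s1" "dT P (\<alpha>@\<beta>) v s2"
        using NT by (auto simp: dT_NT)
      with Cons.IH[of v s2] obtain v1 v2 t1 t2 where "v = v1@v2" "s2 = t1+t2" "dT P \<alpha> v1 t1" "dT P \<beta> v2 t2" by blast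
      then show "\<exists>z1 z2 s1 s2. z = z1 @ z2 \<and> s = s1 + s2 \<and> dT P (x # \<alpha>) z1 s1 \<and> dT P \<beta> z2 s2"
        using NT \<open>(A,\<gamma>) \<in> P\<close> \<open>z = u @ v\<close> \<open>s = Suc (s1+s2)\<close> \<open>dT P \<gamma> u s1\<close>
        by (intro exI[of _ "u@v1"] exI[of _ v2] exI[of _ "Suc (s1+t1)"] exI[of _ t2]) (auto intro: dT.nt)
    next
      assume "\<exists>z1 z2 s1 s2. z = z1 @ z2 \<and> s = s1 + s2 \<and> dT P (x # \<alpha>) z1 s1 \<and> dT P \<beta> z2 s2"
      then obtain z1 z2 s1 s2 where a: "z = z1 @ z2" "s = s1 + s2" "dT P (x # \<alpha>) z1 s1" "dT P \<beta> z2 s2" by blast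
      then obtain \<gamma> u v t1 t2 where b: "(A,\<gamma>) \<in> P" "z1 = u @ v" "s1 = Suc (t1+t2)" "dT P \<gamma> u t1" "dT P \<alpha> v t2"
        using NT by (auto simp: dT_NT)
      have "dT P (\<alpha>@\<beta>) (v@z2) (t2+s2)" using Cons.IH a b by blast
      from dT.nt[OF b(1) b(4) this] show "dT P ((x # \<alpha>) @ \<beta>) z s" using a b NT by (simp add: add.assoc)
    qed
  next
    case (Tm a)
    show ?thesis
    proof
      assume "dT P ((x # \<alpha>) @ \<beta>) z s"
      then obtain w where "z = a # w" "dT P (\<alpha>@\<beta>) w s" using Tm by auto
      with Cons.IH[of w s] show "\<exists>z1 z2 s1 s2. z = z1 @ z2 \<and> s = s1 + s2 \<and> dT P (x # \<alpha>) z1 s1 \<and> dT P \<beta> z2 s2"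
        using Tm by (metis Cons_eq_appendI dT_Tm)
    next
      assume "\<exists>z1 z2 s1 s2. z = z1 @ z2 \<and> s = s1 + s2 \<and> dT P (x # \<alpha>) z1 s1 \<and> dT P \<beta> z2 s2"
      then show "dT P ((x # \<alpha>) @ \<beta>) z s" using Tm Cons.IH by fastforce
    qed
  qed
qed

lemma derives1_ctx: "derives1 P \<alpha> \<beta> \<Longrightarrow> derives1 P (l @ \<alpha> @ r) (l @ \<beta> @ r)"
proof (induction rule: derives1.induct)
  case (step A w l' r')
  from derives1.step[OF step, of "l@l'" "r'@r"] show ?case by simp
qed

lemma derives_ctx: "derives P \<alpha> \<beta> \<Longrightarrow> derives P (l @ \<alpha> @ r) (l @ \<beta> @ r)"
  unfolding derives_def
  by (induction rule: rtranclp_induct) (auto intro: rtranclp.rtrancl_into_rtrancl derives1_ctx)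

lemma derives_trans: "derives P a b \<Longrightarrow> derives P b c \<Longrightarrow> derives P a c"
  unfolding derives_def by auto

lemma dT_derives: "dT P \<alpha> z s \<Longrightarrow> derives P \<alpha> (map Tm z)"
proof (induction rule: dT.induct)
  case nil
  then show ?case by (simp add: derives_def)
next
  case (tm \<alpha> w s a)
  then show ?case using derives_ctx[OF tm.IH, of "[Tm a]" "[]"] by simp
next
  case (nt A \<gamma> u s1 \<alpha> v s2)
  have 1: "derives P (NT A # \<alpha>) (\<gamma> @ \<alpha>)"
    using derives1.step[OF nt.hyps(1), of "[]" \<alpha>] unfolding derives_def by auto
  have 2: "derives P (\<gamma> @ \<alpha>) (map Tm u @ \<alpha>)" using derives_ctx[OF nt.IH(1), of "[]" \<alpha>] by simp
  have 3: "derives P (map Tm u @ \<alpha>) (map Tm u @ map Tm v)" using derives_ctx[OF nt.IH(2), of "map Tm u" "[]"] by simp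
  show ?case using derives_trans[OF 1 derives_trans[OF 2 3]] by simp
qed

lemma dT_map_Tm: "dT P (map Tm z) z 0"
  by (induction z) (auto intro: dT.intros)

lemma derives_dT: "derives P \<alpha> (map Tm z) \<Longrightarrow> \<exists>s. dT P \<alpha> z s"
  unfolding derives_def
proof (induction rule: converse_rtranclp_induct)
  case base
  then show ?case using dT_map_Tm by blast
next
  case (step \<alpha> \<beta>)
  from step.hyps(1) obtain A \<gamma> l r where h: "(A,\<gamma>) \<in> P" "\<alpha> = l @ [NT A] @ r" "\<beta> = l @ \<gamma> @ r"
    by (auto elim: derives1.cases)
  from step.IH obtain s where "dT P \<beta> z s" by blast
  then obtain z1 z2 z3 s1 s2 s3 where a: "z = z1@z2@z3" "dT P l z1 s1" "dT P \<gamma> z2 s2" "dT P r z3 s3"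
    unfolding h dT_append by blast
  have "dT P (NT A # r) (z2@z3) (Suc (s2+s3))" using dT.nt[OF h(1) a(3) a(4)] .
  then have "dT P (l @ NT A # r) (z1 @ z2 @ z3) (s1 + Suc (s2+s3))" using a(2) dT_append by blast
  then show ?case using h a by auto
qed

lemma Lang_dT: "Lang P S = {z. \<exists>s. dT P [NT S] z s}"
  unfolding Lang_def using dT_derives derives_dT by blast



definition ctx :: "('n,'t) prods \<Rightarrow> 'n \<Rightarrow> 't list \<Rightarrow> 'n \<Rightarrow> 't list \<Rightarrow> nat \<Rightarrow> bool" where
  "ctx P A u B y c \<longleftrightarrow> (\<forall>w s. dT P [NT B] w s \<longrightarrow> dT P [NT A] (u @ w @ y) (s + c))"

lemma ctx_refl: "ctx P A [] A [] 0" by (simp add: ctx_def)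

lemma ctx_comp: "ctx P A u B y c \<Longrightarrow> ctx P B u' C y' c' \<Longrightarrow> ctx P A (u@u') C (y'@y) (c+c')"
proof -
  assume a: "ctx P A u B y c" "ctx P B u' C y' c'"
  show ?thesis unfolding ctx_def
  proof (intro allI impI)
    fix w s assume "dT P [NT C] w s"
    then have "dT P [NT B] (u'@w@y') (s+c')" using a(2) unfolding ctx_def by blast
    then have "dT P [NT A] (u@(u'@w@y')@y) (s+c'+c)" using a(1) unfolding ctx_def by blast
    then show "dT P [NT A] ((u@u') @ w @ y'@y) (s + (c+c'))" by (simp add: ac_simps)
  qed
qed

lemma descend:
  "dT P \<gamma> z s \<Longrightarrow> length z > length \<gamma> * K \<Longrightarrow> K \<ge> 1 \<Longrightarrow>
   \<exists>C z1 zc z3 sc r. z = z1@zc@z3 \<and> dT P [NT C] zc sc \<and> length zc > K \<and> s = sc + r \<and>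
      (\<forall>w' s'. dT P [NT C] w' s' \<longrightarrow> dT P \<gamma> (z1@w'@z3) (s'+r))"
proof (induction rule: dT.induct)
  case nil
  then show ?case by simp
next
  case (tm \<alpha> w s a)
  then have "length w > length \<alpha> * K" by simp
  with tm.IH tm.prems obtain C z1 zc z3 sc r where
    "w = z1@zc@z3 \<and> dT P [NT C] zc sc \<and> length zc > K \<and> s = sc + r \<and>
      (\<forall>w' s'. dT P [NT C] w' s' \<longrightarrow> dT P \<alpha> (z1@w'@z3) (s'+r))" by blast
  then show ?case by - (rule exI[of _ C], rule exI[of _ "a#z1"], rule exI[of _ zc], rule exI[of _ z3], rule exI[of _ sc], rule exI[of _ r], auto)
next
  case (nt A \<gamma> u s1 \<alpha> v s2)
  show ?case
  proof (cases "length u > K")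
    case True
    have "dT P [NT A] u (Suc s1)" using dT.nt[OF nt.hyps(1,2) dT.nil] by simp
    moreover have "\<forall>w' s'. dT P [NT A] w' s' \<longrightarrow> dT P (NT A # \<alpha>) (w'@v) (s'+s2)"
      using dT_append[of P "[NT A]" \<alpha>] nt.hyps(3) by auto
    ultimately show ?thesis using True
      by - (rule exI[of _ A], rule exI[of _ "[]"], rule exI[of _ u], rule exI[of _ v], rule exI[of _ "Suc s1"], rule exI[of _ s2], auto)
  next
    case False
    then have "length v > length \<alpha> * K" using nt.prems by (simp add: algebra_simps)
    with nt.IH(2) nt.prems obtain C z1 zc z3 sc r where e:
      "v = z1@zc@z3" "dT P [NT C] zc sc" "length zc > K" "s2 = sc + r"
        "\<forall>w' s'. dT P [NT C] w' s' \<longrightarrow> dT P \<alpha> (z1@w'@z3) (s'+r)" by blast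
    have c: "\<forall>w' s'. dT P [NT C] w' s' \<longrightarrow> dT P (NT A # \<alpha>) ((u@z1)@w'@z3) (s' + Suc (s1+r))"
    proof (intro allI impI)
      fix w' s' assume "dT P [NT C] w' s'"
      then have "dT P \<alpha> (z1@w'@z3) (s'+r)" using e by blast
      from dT.nt[OF nt.hyps(1,2) this] have "dT P (NT A # \<alpha>) (u @ z1 @ w' @ z3) (Suc (s1 + (s' + r)))" .
      moreover have "Suc (s1 + (s' + r)) = s' + Suc (s1+r)" by simp
      ultimately show "dT P (NT A # \<alpha>) ((u@z1)@w'@z3) (s' + Suc (s1+r))" by simp
    qed
    show ?thesis using e c
      by - (rule exI[of _ C], rule exI[of _ "u@z1"], rule exI[of _ zc], rule exI[of _ z3], rule exI[of _ sc], rule exI[of _ "Suc (s1+r)"], auto)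
  qed
qed

definition bnd :: "('n,'t) prods \<Rightarrow> nat" where
  "bnd P = Suc (Max (insert 0 ((\<lambda>p. length (snd p)) ` P)))"

lemma bnd_ge: "finite P \<Longrightarrow> (A,\<gamma>) \<in> P \<Longrightarrow> length \<gamma> \<le> bnd P"
proof -
  assume a: "finite P" "(A,\<gamma>) \<in> P"
  have "length \<gamma> \<in> insert 0 ((\<lambda>p. length (snd p)) ` P)" using a(2) by force
  then have "length \<gamma> \<le> Max (insert 0 ((\<lambda>p. length (snd p)) ` P))" using a(1) by (intro Max_ge) auto
  then show ?thesis unfolding bnd_def by simp
qed

lemma bnd_pos: "bnd P \<ge> 1" by (simp add: bnd_def)

lemma descend1:
  assumes "finite P" "dT P [NT A] z s" "length z > bnd P * K" "K \<ge> 1"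
  shows "\<exists>C z1 zc z3 sc r. z = z1@zc@z3 \<and> dT P [NT C] zc sc \<and> length zc > K \<and> s = sc + r \<and> r \<ge> 1 \<and>
      ctx P A z1 C z3 r"
proof -
  obtain \<gamma> s1 where g: "(A,\<gamma>) \<in> P" "s = Suc s1" "dT P \<gamma> z s1" using dT_single[THEN iffD1, OF assms(2)] by blast
  have "length \<gamma> * K \<le> bnd P * K" using bnd_ge[OF assms(1) g(1)] by (rule mult_right_mono) simp
  then have lt: "length z > length \<gamma> * K" using assms(3) by linarith
  obtain C z1 zc z3 sc r where d: "z = z1@zc@z3" "dT P [NT C] zc sc" "length zc > K" "s1 = sc + r"
      "\<forall>w' s'. dT P [NT C] w' s' \<longrightarrow> dT P \<gamma> (z1@w'@z3) (s'+r)"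
    using descend[OF g(3) lt assms(4)] by blast
  have "ctx P A z1 C z3 (Suc r)" unfolding ctx_def
  proof (intro allI impI)
    fix w s assume "dT P [NT C] w s"
    then have "dT P \<gamma> (z1@w@z3) (s+r)" using d(5) by blast
    then have "dT P [NT A] (z1 @ w @ z3) (Suc (s + r))" using dT.nt[OF g(1) _ dT.nil] by simp
    then show "dT P [NT A] (z1 @ w @ z3) (s + Suc r)" by simp
  qed
  then show ?thesis using d g by - (rule exI[of _ C], rule exI[of _ z1], rule exI[of _ zc], rule exI[of _ z3], rule exI[of _ sc], rule exI[of _ "Suc r"], auto)
qed

lemma lowest:
  assumes "finite P" "K \<ge> 1"
  shows "dT P [NT A] z s \<Longrightarrow> length z > K \<Longrightarrow> \<exists>B u w y c s3. z = u@w@y \<and> ctx P A u B y c \<and> dT P [NT B] w s3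
     \<and> s = c + s3 \<and> length w > K \<and> length w \<le> bnd P * K"
proof (induction s arbitrary: A z rule: less_induct)
  case (less s)
  show ?case
  proof (cases "length z \<le> bnd P * K")
    case True
    then show ?thesis using less.prems ctx_refl
      by - (rule exI[of _ A], rule exI[of _ "[]"], rule exI[of _ z], rule exI[of _ "[]"], rule exI[of _ 0], rule exI[of _ s], auto)
  next
    case False
    then obtain C z1 zc z3 sc r where d: "z = z1@zc@z3" "dT P [NT C] zc sc" "length zc > K" "s = sc + r" "r \<ge> 1"
      "ctx P A z1 C z3 r" using descend1[OF assms(1) less.prems(1) _ assms(2)] by (meson not_le)
    from less.IH[of sc C zc] d obtain B u w y c s3 where
      e: "zc = u@w@y" "ctx P C u B y c" "dT P [NT B] w s3" "sc = c + s3" "length w > K" "length w \<le> bnd P * K"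
      by auto
    show ?thesis using ctx_comp[OF d(6) e(2)] d e
      by - (rule exI[of _ B], rule exI[of _ "z1@u"], rule exI[of _ w], rule exI[of _ "y@z3"], rule exI[of _ "r+c"], rule exI[of _ s3], auto)
  qed
qed

lemma dT_lhs: "dT P [NT A] z s \<Longrightarrow> A \<in> fst ` P"
proof -
  assume a: "dT P [NT A] z s"
  obtain \<gamma> s1 where "(A,\<gamma>) \<in> P" "s = Suc s1" "dT P \<gamma> z s1" using dT_single[THEN iffD1, OF a] by blast
  then show ?thesis by force
qed

lemma repeat:
  assumes "finite P"
  shows "M \<subseteq> fst ` P \<Longrightarrow> card M + i \<ge> card (fst ` P) \<Longrightarrow> dT P [NT A] z s \<Longrightarrow> length z > bnd P ^ i \<Longrightarrow>
    (\<exists>B\<in>M. \<exists>u w y c s3. z = u@w@y \<and> ctx P A u B y c \<and> dT P [NT B] w s3 \<and> s = c + s3) \<or>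
    (\<exists>B u v w x y c1 c2 s3. z = u@v@w@x@y \<and> ctx P A u B y c1 \<and> ctx P B v B x c2 \<and> c2 \<ge> 1 \<and>
        dT P [NT B] w s3 \<and> s = c1 + c2 + s3)"
proof (induction i arbitrary: M A z s)
  case 0
  have fin: "finite (fst ` P)" using assms by simp
  have "M = fst ` P" using card_seteq[OF fin 0(1)] 0(2) by simp
  then have "A \<in> M" using dT_lhs[OF 0(3)] by simp
  then show ?case using 0 ctx_refl
    by - (rule disjI1, rule bexI[of _ A], rule exI[of _ "[]"], rule exI[of _ z], rule exI[of _ "[]"], rule exI[of _ 0], rule exI[of _ s], auto)
next
  case (Suc i)
  show ?case
  proof (cases "A \<in> M")
    case True
    then show ?thesis using Suc ctx_refl
      by - (rule disjI1, rule bexI[of _ A], rule exI[of _ "[]"], rule exI[of _ z], rule exI[of _ "[]"], rule exI[of _ 0], rule exI[of _ s], auto)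
  next
    case False
    have AP: "A \<in> fst ` P" using dT_lhs[OF Suc(4)] .
    have fM: "finite M" using Suc(2) assms finite_subset by blast
    obtain C z1 zc z3 sc r where d: "z = z1@zc@z3" "dT P [NT C] zc sc" "length zc > bnd P ^ i" "s = sc + r" "r \<ge> 1"
      "ctx P A z1 C z3 r" using descend1[OF assms Suc(4), of "bnd P ^ i"] Suc(5) bnd_pos
      by (metis One_nat_def le_eq_less_or_eq one_le_power power_Suc)
    have h1: "insert A M \<subseteq> fst ` P" using AP Suc(2) by auto
    have h2: "card (insert A M) + i \<ge> card (fst ` P)" using Suc(3) False fM by simp
    note IH = Suc.IH[OF h1 h2 d(2) d(3)]
    show ?thesis
    proof (cases "(\<exists>B\<in>insert A M. \<exists>u w y c s3. zc = u@w@y \<and> ctx P C u B y c \<and> dT P [NT B] w s3 \<and> sc = c + s3)")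
      case True
      then obtain B u w y c s3 where e: "B \<in> insert A M" "zc = u@w@y" "ctx P C u B y c" "dT P [NT B] w s3" "sc = c + s3"
        by blast
      have cc: "ctx P A (z1@u) B (y@z3) (r+c)" using ctx_comp[OF d(6) e(3)] .
      show ?thesis
      proof (cases "B = A")
        case True
        then show ?thesis using cc d e ctx_refl
          by - (rule disjI2, rule exI[of _ A], rule exI[of _ "[]"], rule exI[of _ "z1@u"], rule exI[of _ w], rule exI[of _ "y@z3"], rule exI[of _ "[]"], rule exI[of _ 0], rule exI[of _ "r+c"], rule exI[of _ s3], auto)
      next
        case False
        then show ?thesis using cc d e
          by - (rule disjI1, rule bexI[of _ B], rule exI[of _ "z1@u"], rule exI[of _ w], rule exI[of _ "y@z3"], rule exI[of _ "r+c"], rule exI[of _ s3], auto)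
      qed
    next
      case False
      with IH obtain B u v w x y c1 c2 s3 where e: "zc = u@v@w@x@y" "ctx P C u B y c1" "ctx P B v B x c2" "c2 \<ge> 1"
        "dT P [NT B] w s3" "sc = c1 + c2 + s3" by blast
      show ?thesis using ctx_comp[OF d(6) e(2)] d e
        by - (rule disjI2, rule exI[of _ B], rule exI[of _ "z1@u"], rule exI[of _ v], rule exI[of _ w], rule exI[of _ x], rule exI[of _ "y@z3"], rule exI[of _ "r+c1"], rule exI[of _ c2], rule exI[of _ s3], auto)
    qed
  qed
qed

lemma pumping_aux:
  assumes "finite P"
  defines "K \<equiv> bnd P ^ card (fst ` P)"
  shows "dT P [NT S] z s \<Longrightarrow> length z > bnd P * K \<Longrightarrow>
    \<exists>u v w x y. z = u@v@w@x@y \<and> length (v@w@x) \<le> bnd P * K \<and> v@x \<noteq> [] \<and> (\<exists>s'. dT P [NT S] (u@w@y) s')"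
proof (induction s arbitrary: z rule: less_induct)
  case (less s)
  have K1: "K \<ge> 1" unfolding K_def using one_le_power[OF bnd_pos] by simp
  have "K \<le> bnd P * K" using mult_le_mono1[OF bnd_pos[of P], of K] by simp
  then have "length z > K" using less.prems(2) by linarith
  then obtain B0 u0 w0 y0 c s3 where l: "z = u0@w0@y0" "ctx P S u0 B0 y0 c" "dT P [NT B0] w0 s3"
     "s = c + s3" "length w0 > K" "length w0 \<le> bnd P * K"
    using lowest[OF assms(1) K1 less.prems(1)] by blast
  have "(\<exists>B\<in>{}. \<exists>u w y c s3'. w0 = u@w@y \<and> ctx P B0 u B y c \<and> dT P [NT B] w s3' \<and> s3 = c + s3') \<or>
    (\<exists>B u v w x y c1 c2 s3'. w0 = u@v@w@x@y \<and> ctx P B0 u B y c1 \<and> ctx P B v B x c2 \<and> c2 \<ge> 1 \<and>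
        dT P [NT B] w s3' \<and> s3 = c1 + c2 + s3')"
    by (rule repeat[OF assms(1)]) (use l in \<open>auto simp: K_def\<close>)
  then obtain B u1 v w x y1 c1 c2 s3' where r: "w0 = u1@v@w@x@y1" "ctx P B0 u1 B y1 c1" "ctx P B v B x c2" "c2 \<ge> 1"
        "dT P [NT B] w s3'" "s3 = c1 + c2 + s3'" by blast
  have cc: "ctx P S (u0@u1) B (y1@y0) (c+c1)" using ctx_comp[OF l(2) r(2)] .
  then have d: "dT P [NT S] ((u0@u1)@w@(y1@y0)) (s3' + (c+c1))" using r(5) unfolding ctx_def by blast
  show ?case
  proof (cases "v@x = []")
    case False
    have "length (v@w@x) \<le> bnd P * K" using l(6) r(1) by simp
    then show ?thesis using False d l r
      by - (rule exI[of _ "u0@u1"], rule exI[of _ v], rule exI[of _ w], rule exI[of _ x], rule exI[of _ "y1@y0"], auto)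
  next
    case True
    have "z = (u0@u1)@w@(y1@y0)" using True l r by simp
    moreover have "s3' + (c+c1) < s" using l r by simp
    ultimately show ?thesis using less.IH[OF _ d] less.prems(2) by simp
  qed
qed

lemma pumping:
  assumes "finite P"
  shows "\<exists>k. \<forall>z \<in> Lang P S. length z > k \<longrightarrow>
    (\<exists>u v w x y. z = u@v@w@x@y \<and> length (v@w@x) \<le> k \<and> v@x \<noteq> [] \<and> u@w@y \<in> Lang P S)"
proof -
  let ?k = "bnd P * bnd P ^ card (fst ` P)"
  have "\<forall>z \<in> Lang P S. length z > ?k \<longrightarrow>
    (\<exists>u v w x y. z = u@v@w@x@y \<and> length (v@w@x) \<le> ?k \<and> v@x \<noteq> [] \<and> u@w@y \<in> Lang P S)"
  proof (intro ballI impI)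
    fix z assume a: "z \<in> Lang P S" "length z > ?k"
    then obtain s where "dT P [NT S] z s" unfolding Lang_dT by blast
    from pumping_aux[OF assms this a(2)] obtain u v w x y s' where
      "z = u@v@w@x@y" "length (v@w@x) \<le> ?k" "v@x \<noteq> []" "dT P [NT S] (u@w@y) s'" by blast
    then show "\<exists>u v w x y. z = u@v@w@x@y \<and> length (v@w@x) \<le> ?k \<and> v@x \<noteq> [] \<and> u@w@y \<in> Lang P S"
      unfolding Lang_dT by blast
  qed
  then show ?thesis by (rule exI)
qed

lemma CFL_pumping:
  assumes "CFL L"
  shows "\<exists>k. \<forall>z \<in> L. length z > k \<longrightarrow>
    (\<exists>u v w x y. z = u@v@w@x@y \<and> length (v@w@x) \<le> k \<and> v@x \<noteq> [] \<and> u@w@y \<in> L)"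
proof -
  obtain P :: "(nat, 'a) prods" and S where "finite P" "L = Lang P S" using assms unfolding CFL_def by blast
  then show ?thesis using pumping[of P S] by simp
qed



lemma ps_len: "length x = length y \<Longrightarrow> length (perfect_shuffle x y) = 2 * length x"
  by (induction x y rule: list_induct2) auto

lemma ps_nth: "length x = length y \<Longrightarrow> j < length x \<Longrightarrow>
   perfect_shuffle x y ! (2*j) = x!j \<and> perfect_shuffle x y ! (2*j+1) = y!j"
proof (induction x y arbitrary: j rule: list_induct2)
  case Nil
  then show ?case by simp
next
  case (Cons a x b y)
  then show ?case by (cases j) auto
qed

lemma ps_snoc: "length x = length y \<Longrightarrow> perfect_shuffle (x@[a]) (y@[b]) = perfect_shuffle x y @ [a,b]"
  by (induction x y rule: list_induct2) auto

lemma ps_rev: "length x = length y \<Longrightarrow> rev (perfect_shuffle x y) = perfect_shuffle (rev y) (rev x)"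
  by (induction x y rule: list_induct2) (auto simp: ps_snoc)

lemma ps_count: "length x = length y \<Longrightarrow> count_list (perfect_shuffle x y) c = count_list x c + count_list y c"
  by (induction x y rule: list_induct2) auto

lemma count_rep: "count_list (replicate n a) c = (if a = c then n else 0)"
  by (induction n) auto

lemma pssr_pal: "z \<in> pssr L \<Longrightarrow> rev z = z"
proof -
  assume "z \<in> pssr L"
  then obtain x where "z = perfect_shuffle x (rev x)" unfolding pssr_def by blast
  then show ?thesis using ps_rev[of x "rev x"] by simp
qed

definition g :: "nat \<Rightarrow> nat \<Rightarrow> nat" where
  "g N j = (if j < N then 0 else if j < 2*N then 1 else if j < 3*N then 2 else 3)"

definition xN :: "nat \<Rightarrow> nat list" where
  "xN N = replicate N 0 @ replicate N 1 @ replicate N 2 @ replicate N 3"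

definition zN :: "nat \<Rightarrow> nat list" where
  "zN N = perfect_shuffle (xN N) (rev (xN N))"

lemma xN_len: "length (xN N) = 4*N" by (simp add: xN_def)

lemma xN_nth: "j < 4*N \<Longrightarrow> xN N ! j = g N j"
  by (auto simp: xN_def g_def nth_append)

lemma zN_len: "length (zN N) = 8*N" by (simp add: zN_def ps_len xN_len)

lemma zN_even: "j < 4*N \<Longrightarrow> zN N ! (2*j) = g N j"
  using ps_nth[of "xN N" "rev (xN N)" j] by (simp add: zN_def xN_len xN_nth)

lemma zN_odd: "j < 4*N \<Longrightarrow> zN N ! (2*j+1) = g N (4*N - 1 - j)"
  using ps_nth[of "xN N" "rev (xN N)" j] by (simp add: zN_def xN_len xN_nth rev_nth)

lemma zN_nth: "i < 8*N \<Longrightarrow> zN N ! i = (if even i then g N (i div 2) else g N (4*N - 1 - i div 2))"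
proof (cases "even i")
  case True
  assume "i < 8*N"
  with True obtain j where "i = 2*j" "j < 4*N" by (auto elim: evenE)
  then show ?thesis using zN_even by simp
next
  case False
  assume "i < 8*N"
  with False obtain j where "i = 2*j+1" "j < 4*N" by (auto elim!: oddE)
  then show ?thesis using zN_odd by simp
qed

lemma zN_pal: "rev (zN N) = zN N"
  unfolding zN_def by (simp add: ps_rev)

lemma zN_in: "N \<ge> 1 \<Longrightarrow> zN N \<in> pssr L7"
  unfolding pssr_def L7_def zN_def xN_def by blast

lemma zN_count: "c \<le> 3 \<Longrightarrow> count_list (zN N) c = 2*N"
  unfolding zN_def by (auto simp: ps_count xN_def count_rep)

lemma zN_set: "i < 8*N \<Longrightarrow> zN N ! i \<le> 3"
  by (simp add: zN_nth g_def)

lemma zN_R1: "i < 2*N \<Longrightarrow> zN N ! i = 0 \<or> zN N ! i = 3"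
proof -
  assume a: "i < 2*N"
  then have "i div 2 < N" by linarith
  then show ?thesis using a by (simp add: zN_nth g_def; arith)
qed

lemma zN_R2: "2*N \<le> i \<Longrightarrow> i < 6*N \<Longrightarrow> zN N ! i = 1 \<or> zN N ! i = 2"
proof -
  assume a: "2*N \<le> i" "i < 6*N"
  then have "i div 2 \<ge> N" "i div 2 < 3*N" by linarith+
  then show ?thesis using a by (simp add: zN_nth g_def; arith)
qed

lemma zN_R3: "6*N \<le> i \<Longrightarrow> i < 8*N \<Longrightarrow> zN N ! i = 0 \<or> zN N ! i = 3"
proof -
  assume a: "6*N \<le> i" "i < 8*N"
  then have "i div 2 \<ge> 3*N" "i div 2 < 4*N" by linarith+
  then show ?thesis using a by (simp add: zN_nth g_def; arith)
qed

lemma pos_in: "z = u@v@w@x@y \<Longrightarrow> c \<in> set (v@x) \<Longrightarrow>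
  \<exists>i. length u \<le> i \<and> i < length u + length v + length w + length x \<and> z!i = c"
proof -
  assume z: "z = u@v@w@x@y" and c: "c \<in> set (v@x)"
  show ?thesis
  proof (cases "c \<in> set v")
    case True
    then obtain j where "j < length v" "v!j = c" by (auto simp: in_set_conv_nth)
    then show ?thesis using z by (intro exI[of _ "length u + j"]) (auto simp: nth_append)
  next
    case False
    then have "c \<in> set x" using c by simp
    then obtain j where "j < length x" "x!j = c" by (auto simp: in_set_conv_nth)
    then show ?thesis using z by (intro exI[of _ "length u + length v + length w + j"]) (auto simp: nth_append)
  qed
qed

lemma vx_empty:
  fixes l :: "nat list"
  assumes "count_list l 0 = count_list l 1" "count_list l 2 = count_list l 3"
    and "set l \<subseteq> {0,3} \<or> set l \<subseteq> {1,2}"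
  shows "l = []"
proof (cases "set l \<subseteq> {0,3}")
  case True
  then have "1 \<notin> set l" "2 \<notin> set l" by auto
  then have "count_list l 1 = 0" "count_list l 2 = 0" by (simp_all add: count_list_0_iff)
  then have "count_list l 0 = 0" "count_list l 3 = 0" using assms by simp_all
  then have "0 \<notin> set l" "3 \<notin> set l" by (simp_all add: count_list_0_iff)
  then have "set l = {}" using True
  proof -
    assume a: "0 \<notin> set l" "3 \<notin> set l" "set l \<subseteq> {0,3}"
    show "set l = {}"
    proof (rule equals0I)
      fix c assume "c \<in> set l"
      then have "c = 0 \<or> c = 3" using a(3) by auto
      then show False using a(1,2) \<open>c \<in> set l\<close> by auto
    qed
  qed
  then show ?thesis by simp
next
  case False
  then have F: "set l \<subseteq> {1,2}" using assms(3) by blast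
  then have "0 \<notin> set l" "3 \<notin> set l" by auto
  then have "count_list l 0 = 0" "count_list l 3 = 0" by (simp_all add: count_list_0_iff)
  then have "count_list l 1 = 0" "count_list l 2 = 0" using assms by simp_all
  then have "1 \<notin> set l" "2 \<notin> set l" by (simp_all add: count_list_0_iff)
  then have "set l = {}" using F
  proof -
    assume a: "1 \<notin> set l" "2 \<notin> set l" "set l \<subseteq> {1,2}"
    show "set l = {}"
    proof (rule equals0I)
      fix c assume "c \<in> set l"
      then have "c = 1 \<or> c = 2" using a(3) by auto
      then show False using a(1,2) \<open>c \<in> set l\<close> by auto
    qed
  qed
  then show ?thesis by simp
qed

lemma straddle:
  assumes z: "zN N = u@v@w@x@y" and pal: "rev (u@w@y) = u@w@y"
    and k: "length (v@w@x) \<le> k" "k < N" and ne: "v@x \<noteq> []"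
    and p: "length u < 2*N" "2*N < length u + length (v@w@x)"
  shows False
proof -
  define r where "r = length v + length x"
  have "length (v@x) \<noteq> 0" using ne by simp
  then have r1: "r \<ge> 1" unfolding r_def by (cases v; cases x) auto
  have rk: "r \<le> k" using k(1) unfolding r_def by simp
  have len: "length u + length v + length w + length x + length y = 8*N" using arg_cong[OF z, of length] zN_len[of N] by simp
  have zr: "zN N = rev y @ rev x @ rev w @ rev v @ rev u" using zN_pal[of N] z by simp
  have key: "zN N ! i = zN N ! (i + r)" if i1: "length u + length w \<le> i" and i2: "i < length y" for i
  proof -
    have "zN N ! i = rev y ! i" using zr i2 by (simp add: nth_append)
    also have "\<dots> = (rev y @ rev w @ rev u) ! i" using i2 by (simp add: nth_append)
    also have "\<dots> = (u@w@y) ! i" using pal by simp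
    also have "\<dots> = y ! (i - length u - length w)"
    proof -
      have "(u@w@y) ! i = ((u@w)@y) ! (length (u@w) + (i - length u - length w))" using i1 by simp
      then show ?thesis by (simp only: nth_append_length_plus)
    qed
    also have "\<dots> = zN N ! (i + r)"
    proof -
      have "zN N ! (i + r) = ((u@v@w@x)@y) ! (length (u@v@w@x) + (i - length u - length w))"
        using z i1 unfolding r_def by (simp add: ac_simps)
      then show ?thesis by (simp only: nth_append_length_plus)
    qed
    finally show ?thesis .
  qed
  have ylen: "length y > 5*N" using len k p by simp
  have wlen: "length u + length w < 3*N" using k p by simp
  show False
  proof (cases "even r")
    case True
    then obtain t where t: "r = 2*t" by (auto elim: evenE)
    have "zN N ! (4*N-1) = zN N ! (4*N - 1 + r)" using key[of "4*N-1"] ylen wlen by simp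
    moreover have "zN N ! (4*N-1) = 2"
    proof -
      have e: "4*N-1 = 2*(2*N-1)+1" using k by arith
      have "zN N ! (2*(2*N-1)+1) = g N (4*N-1-(2*N-1))" using k by (intro zN_odd) arith
      moreover have "4*N-1-(2*N-1) = 2*N" using k by arith
      ultimately show ?thesis using e k by (simp add: g_def)
    qed
    moreover have "zN N ! (4*N-1+r) = 1"
    proof -
      have e: "4*N-1+r = 2*(2*N-1+t)+1" using k t by arith
      have "zN N ! (2*(2*N-1+t)+1) = g N (4*N-1-(2*N-1+t))" using k t rk by (intro zN_odd) arith
      moreover have "4*N-1-(2*N-1+t) = 2*N - t" using k t rk by arith
      ultimately show ?thesis using e k t rk r1 by (simp add: g_def)
    qed
    ultimately show False by simp
  next
    case False
    then obtain t where t: "r = 2*t+1" by (auto elim!: oddE)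
    have "zN N ! (4*N) = zN N ! (4*N + r)" using key[of "4*N"] ylen wlen by simp
    moreover have "zN N ! (4*N) = 2"
      using zN_even[of "2*N" N] k by (simp add: g_def)
    moreover have "zN N ! (4*N+r) = 1"
    proof -
      have e: "4*N+r = 2*(2*N+t)+1" using t by arith
      have "zN N ! (2*(2*N+t)+1) = g N (4*N-1-(2*N+t))" using k t rk by (intro zN_odd) arith
      moreover have "4*N-1-(2*N+t) = 2*N - 1 - t" using k t rk by arith
      moreover have "\<not> 2*N-1-t < N" "2*N-1-t < 2*N" using k t rk by arith+
      then have "g N (2*N-1-t) = 1" by (simp add: g_def)
      ultimately show ?thesis using e by simp
    qed
    ultimately show False by simp
  qed
qed

lemma not_CFL: "\<not> CFL (pssr L7)"
proof
  assume "CFL (pssr L7)"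
  from CFL_pumping[OF this] obtain k where K: "\<forall>z \<in> pssr L7. length z > k \<longrightarrow>
    (\<exists>u v w x y. z = u@v@w@x@y \<and> length (v@w@x) \<le> k \<and> v@x \<noteq> [] \<and> u@w@y \<in> pssr L7)" by blast
  define N where "N = k+1"
  have kN: "k < N" unfolding N_def by simp
  have zin: "zN N \<in> pssr L7" using zN_in[of N] unfolding N_def by simp
  have "length (zN N) > k" using zN_len[of N] unfolding N_def by simp
  from K[rule_format, OF zin this] obtain u v w x y where d: "zN N = u@v@w@x@y" "length (v@w@x) \<le> k" "v@x \<noteq> []" "u@w@y \<in> pssr L7"
    by blast
  have pal: "rev (u@w@y) = u@w@y" using pssr_pal[OF d(4)] .
  obtain x' where x': "u@w@y = perfect_shuffle x' (rev x')" "x' \<in> L7" using d(4) unfolding pssr_def by blast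
  then obtain m n where mn: "x' = replicate m 0 @ replicate m 1 @ replicate n 2 @ replicate n 3" unfolding L7_def by blast
  have cw: "count_list (u@w@y) c = 2 * count_list x' c" for c
    using x'(1) ps_count[of x' "rev x'" c] by simp
  have c01: "count_list (u@w@y) 0 = count_list (u@w@y) 1" and c23: "count_list (u@w@y) 2 = count_list (u@w@y) 3"
    using cw mn by (simp_all add: count_rep)
  have cz: "count_list (zN N) c = count_list (u@w@y) c + count_list (v@x) c" for c
    using d(1) by simp
  have "count_list (v@x) 0 = count_list (v@x) 1"
    using cz[of 0] cz[of 1] zN_count[of 0 N] zN_count[of 1 N] c01 by simp
  moreover have "count_list (v@x) 2 = count_list (v@x) 3"
    using cz[of 2] cz[of 3] zN_count[of 2 N] zN_count[of 3 N] c23 by simp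
  ultimately have ve: "set (v@x) \<subseteq> {0,3} \<or> set (v@x) \<subseteq> {1,2} \<Longrightarrow> False"
    using vx_empty d(3) by blast
  define p where "p = length u"
  define q where "q = length u + length v + length w + length x"
  have pq: "q \<le> p + k" using d(2) unfolding p_def q_def by simp
  have q8: "q \<le> 8*N" using arg_cong[OF d(1), of length] zN_len[of N] unfolding q_def by simp
  have el: "\<exists>i. p \<le> i \<and> i < q \<and> zN N ! i = c" if "c \<in> set (v@x)" for c
    using pos_in[OF d(1) that] unfolding p_def q_def by blast
  consider "q \<le> 2*N" | "2*N \<le> p \<and> q \<le> 6*N" | "6*N \<le> p" | "p < 2*N \<and> 2*N < q" | "p < 6*N \<and> 6*N < q"
    using pq kN by linarith
  then show False
  proof cases
    case 1
    have "set (v@x) \<subseteq> {0,3}"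
    proof
      fix c assume "c \<in> set (v@x)"
      then obtain i where "p \<le> i" "i < q" "zN N ! i = c" using el by blast
      then show "c \<in> {0,3}" using zN_R1[of i N] 1 by auto
    qed
    then show False using ve by blast
  next
    case 2
    have "set (v@x) \<subseteq> {1,2}"
    proof
      fix c assume "c \<in> set (v@x)"
      then obtain i where "p \<le> i" "i < q" "zN N ! i = c" using el by blast
      then show "c \<in> {1,2}" using zN_R2[of N i] 2 by auto
    qed
    then show False using ve by blast
  next
    case 3
    have "set (v@x) \<subseteq> {0,3}"
    proof
      fix c assume "c \<in> set (v@x)"
      then obtain i where "p \<le> i" "i < q" "zN N ! i = c" using el by blast
      then show "c \<in> {0,3}" using zN_R3[of N i] 3 q8 by auto
    qed
    then show False using ve by blast
  next
    case 4
    show False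
      by (rule straddle[OF d(1) pal d(2) kN d(3)]) (use 4 in \<open>auto simp: p_def q_def\<close>)
  next
    case 5
    have z': "zN N = rev y @ rev x @ rev w @ rev v @ rev u" using zN_pal[of N] d(1) by simp
    have pal': "rev (rev y @ rev w @ rev u) = rev y @ rev w @ rev u"
    proof -
      have "rev y @ rev w @ rev u = rev (u@w@y)" by simp
      then show ?thesis using pal by simp
    qed
    have l': "length (rev x @ rev w @ rev v) \<le> k" using d(2) by simp
    have n': "rev x @ rev v \<noteq> []" using d(3) by auto
    have len: "length u + length v + length w + length x + length y = 8*N"
      using arg_cong[OF d(1), of length] zN_len[of N] by simp
    show False
      by (rule straddle[OF z' pal' l' kN n']) (use 5 len in \<open>auto simp: p_def q_def\<close>)
  qed
qed

definition P7 :: "(nat, nat) prods" where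
  "P7 = {(0,[NT 1, NT 2]), (1,[Tm 0, NT 1, Tm 1]), (1,[Tm 0, Tm 1]), (2,[Tm 2, NT 2, Tm 3]), (2,[Tm 2, Tm 3])}"

lemma gen_ab:
  assumes "(A,[Tm a, NT A, Tm b]) \<in> P" "(A,[Tm a, Tm b]) \<in> P"
  shows "m \<ge> 1 \<Longrightarrow> \<exists>s. dT P [NT A] (replicate m a @ replicate m b) s"
proof (induction m)
  case 0
  then show ?case by simp
next
  case (Suc m)
  show ?case
  proof (cases "m = 0")
    case True
    have "dT P [Tm a, Tm b] [a,b] 0" by (auto intro: dT.intros)
    from dT.nt[OF assms(2) this dT.nil] show ?thesis using True by auto
  next
    case False
    then obtain s where s: "dT P [NT A] (replicate m a @ replicate m b) s" using Suc.IH by auto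
    have "dT P [Tm b] [b] 0" by (auto intro: dT.intros)
    then have "dT P ([NT A] @ [Tm b]) ((replicate m a @ replicate m b) @ [b]) (s + 0)"
      using \<open>dT P [Tm b] [b] 0\<close> s by (intro dT_append[THEN iffD2]) blast
    then have "dT P (Tm a # [NT A, Tm b]) (a # (replicate m a @ replicate m b) @ [b]) s" by simp
    from dT.nt[OF assms(1) this dT.nil] have "dT P [NT A] (a # (replicate m a @ replicate m b) @ [b]) (Suc s)" by simp
    moreover have "a # (replicate m a @ replicate m b) @ [b] = replicate (Suc m) a @ replicate (Suc m) b"
      by (simp add: replicate_append_same)
    ultimately show ?thesis by metis
  qed
qed

lemma der_ab:
  assumes "\<And>\<gamma>. (A,\<gamma>) \<in> P \<Longrightarrow> \<gamma> = [Tm a, NT A, Tm b] \<or> \<gamma> = [Tm a, Tm b]"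
  shows "dT P [NT A] z s \<Longrightarrow> \<exists>m\<ge>1. z = replicate m a @ replicate m b"
proof (induction s arbitrary: z rule: less_induct)
  case (less s)
  obtain \<gamma> s1 where g: "(A,\<gamma>) \<in> P" "s = Suc s1" "dT P \<gamma> z s1" using dT_single[THEN iffD1, OF less.prems] by blast
  from assms[OF g(1)] show ?case
  proof
    assume "\<gamma> = [Tm a, Tm b]"
    then have "z = [a,b]" using g(3) by auto
    then show ?thesis by (intro exI[of _ 1]) simp
  next
    assume "\<gamma> = [Tm a, NT A, Tm b]"
    then obtain w where w: "z = a # w" "dT P ([NT A] @ [Tm b]) w s1" using g(3) by auto
    then obtain w1 w2 t1 t2 where w12: "w = w1@w2" "s1 = t1+t2" "dT P [NT A] w1 t1" "dT P [Tm b] w2 t2"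
      using dT_append[THEN iffD1, OF w(2)] by blast
    then have "w2 = [b]" by auto
    obtain m where m: "m \<ge> 1" "w1 = replicate m a @ replicate m b" using less.IH[of t1 w1] w12 g(2) by auto
    have "z = replicate (Suc m) a @ replicate (Suc m) b"
      using w w12 m \<open>w2 = [b]\<close> by (simp add: replicate_append_same)
    then show ?thesis by (intro exI[of _ "Suc m"]) simp
  qed
qed

lemma CFL_L7: "CFL L7"
proof -
  have fin: "finite P7" unfolding P7_def by simp
  have "Lang P7 0 = L7"
  proof
    show "Lang P7 0 \<subseteq> L7"
    proof
      fix z assume "z \<in> Lang P7 0"
      then obtain s where "dT P7 [NT 0] z s" unfolding Lang_dT by blast
      from dT_single[THEN iffD1, OF this] obtain \<gamma> s1 where g: "(0,\<gamma>) \<in> P7" "dT P7 \<gamma> z s1" by blast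
      then have "\<gamma> = [NT 1] @ [NT 2]" unfolding P7_def by auto
      then have "dT P7 ([NT 1] @ [NT 2]) z s1" using g(2) by simp
      from dT_append[THEN iffD1, OF this] obtain z1 z2 t1 t2 where z: "z = z1@z2" "dT P7 [NT 1] z1 t1" "dT P7 [NT 2] z2 t2"
        by blast
      have "\<exists>m\<ge>1. z1 = replicate m 0 @ replicate m 1"
        by (rule der_ab[OF _ z(2)]) (auto simp: P7_def)
      moreover have "\<exists>m\<ge>1. z2 = replicate m 2 @ replicate m 3"
        by (rule der_ab[OF _ z(3)]) (auto simp: P7_def)
      ultimately obtain m n where "m \<ge> 1" "n \<ge> 1" "z1 = replicate m 0 @ replicate m 1" "z2 = replicate n 2 @ replicate n 3"
        by blast
      moreover have "z = replicate m 0 @ replicate m 1 @ replicate n 2 @ replicate n 3" using z(1) calculation by simp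
      ultimately show "z \<in> L7" unfolding L7_def by blast
    qed
  next
    show "L7 \<subseteq> Lang P7 0"
    proof
      fix z assume "z \<in> L7"
      then obtain m n where mn: "m \<ge> 1" "n \<ge> 1" "z = replicate m 0 @ replicate m 1 @ replicate n 2 @ replicate n 3"
        unfolding L7_def by blast
      obtain s1 where s1: "dT P7 [NT 1] (replicate m 0 @ replicate m 1) s1"
        using gen_ab[of 1 0 1 P7 m] mn by (auto simp: P7_def)
      obtain s2 where s2: "dT P7 [NT 2] (replicate n 2 @ replicate n 3) s2"
        using gen_ab[of 2 2 3 P7 n] mn by (auto simp: P7_def)
      have "dT P7 ([NT 1] @ [NT 2]) ((replicate m 0 @ replicate m 1) @ (replicate n 2 @ replicate n 3)) (s1+s2)"
        using s1 s2 by (intro dT_append[THEN iffD2]) blast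
      then have "dT P7 [NT 1, NT 2] z (s1+s2)" using mn by simp
      from dT.nt[OF _ this dT.nil, of 0] have "dT P7 [NT 0] z (Suc (s1+s2))" by (simp add: P7_def)
      then show "z \<in> Lang P7 0" unfolding Lang_dT by blast
    qed
  qed
  then show ?thesis unfolding CFL_def using fin by blast
qed

theorem mainTheorem7:
  shows "CFL L7 \<and> \<not> CFL (pssr L7)"
  using CFL_L7 not_CFL by blast

end
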